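(* For every $(a,b)\in P$ one has $N(a,b)\ge2$, and $N(a,b)=2$ if and only if $a=0$.
   Context: Let $P$ be the set of $(a,b)\in\mathbb{R}^2$ such that the polynomial $h(x)=x^2+ax+b$ has no multiple root and $h(x)>0$ for all real $x$ with $|x|\ge1$ (equivalently: $a^2<4b$, or $a^2>4b$ and $|a|<\min\{2,b+1\}$). For $(a,b)\in P$ let $C_{a,b}$ be the affine curve $y^2+(x^2-1)(x^2+ax+b)=0$ over $\mathbb{R}$, with coordinate ring $\mathbb{R}[C_{a,b}]=\mathbb{R}[x,y]/(y^2+(x^2-1)(x^2+ax+b))$. For $g=u(x)+v(x)y$ ($u,v\in\mathbb{R}[x]$) put $\delta(g)=\max\{\deg u,\deg v+2\}$, and for $0\ne g$ let $\theta(g)$ be the least integer $e\ge0$ with $g=\sum_i g_i^2$, $g_i\in\mathbb{R}[C_{a,b}]$, $\delta(g_i)\le e$. Define $N(a,b):=\theta(1-x^2)$ computed in $\mathbb{R}[C_{a,b}]$ (the stability constant of $C_{a,b}$). *)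

theory Defs
  imports "HOL-Computational_Algebra.Polynomial"
begin

text \<open>Bivariate real polynomials are represented as real poly poly:
  the outer variable is y, coefficients are polynomials in x.\<close>

definition hpoly :: "real \<Rightarrow> real \<Rightarrow> real poly" where
  "hpoly a b = [:b, a, 1:]"

definition P_set :: "(real \<times> real) set" where
  "P_set = {(a, b). rsquarefree (hpoly a b) \<and> (\<forall>x::real. \<bar>x\<bar> \<ge> 1 \<longrightarrow> poly (hpoly a b) x > 0)}"

definition curve_poly :: "real \<Rightarrow> real \<Rightarrow> real poly poly" where
  "curve_poly a b = [: [:-1, 0, 1:] * hpoly a b, 0, 1 :]"

text \<open>Every element of R[C] has a unique representative u(x) + v(x) y, written [:u, v:].
  delta of u + v y is max(deg u, deg v + 2), with deg 0 = -infinity; since only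
  comparisons with e >= 0 matter, the zero polynomial contributes 0.\<close>
definition delta :: "real poly \<Rightarrow> real poly \<Rightarrow> nat" where
  "delta u v = max (if u = 0 then 0 else degree u) (if v = 0 then 0 else degree v + 2)"

definition theta :: "real poly poly \<Rightarrow> real poly poly \<Rightarrow> nat" where
  "theta F g = (LEAST e. \<exists>gs :: (real poly \<times> real poly) list.
      F dvd (g - sum_list (map (\<lambda>(u, v). [:u, v:]^2) gs)) \<and>
      (\<forall>(u, v) \<in> set gs. delta u v \<le> e))"

definition N :: "real \<Rightarrow> real \<Rightarrow> nat" where
  "N a b = theta (curve_poly a b) [: [:1, 0, -1:] :]"

end

theory Submission
  imports Defs "HOL-Computational_Algebra.Fundamental_Theorem_Algebra"
begin

lemma sq2: "[:u, v:]^2 = [:u*u, 2*u*v, v*(v::real poly):]"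
  by (simp add: power2_eq_square algebra_simps smult_add_right)

lemma sum3: "sum_list (map (\<lambda>(u,v). [:u, v:]^2) gs) =
   [: sum_list (map (\<lambda>(u,v). u*u) gs), sum_list (map (\<lambda>(u,v). 2*u*v) gs), sum_list (map (\<lambda>(u,v). v*(v::real poly)) gs) :]"
  by (induct gs) (auto simp: sq2)

lemma poly_sum_list: "poly (sum_list (map f xs)) x = sum_list (map (\<lambda>y. poly (f y) x) xs)"
  by (induct xs) auto

lemma dvd_char:
  fixes A0 A1 A2 :: "real poly"
  assumes "curve_poly a b dvd ([:G:] - [:A0, A1, A2:])"
  shows "A1 = 0 \<and> G - A0 = A2 * ([:1,0,-1:] * hpoly a b)"
proof -
  let ?F = "curve_poly a b"
  from assms obtain Q where Q: "[:G:] - [:A0, A1, A2:] = ?F * Q" by (auto elim: dvdE)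
  have F0: "?F \<noteq> 0" unfolding curve_poly_def by simp
  have dF: "degree ?F = 2" unfolding curve_poly_def by simp
  have dG: "degree ([:G:] - [:A0, A1, A2:]) \<le> 2"
    by (simp add: degree_pCons_le le_trans[OF degree_diff_le])
  have "degree Q = 0"
  proof (rule ccontr)
    assume "degree Q \<noteq> 0"
    hence "Q \<noteq> 0" by auto
    hence "degree (?F * Q) = 2 + degree Q" using F0 dF by (simp add: degree_mult_eq)
    moreover have "degree (?F * Q) \<le> 2" using dG Q by metis
    ultimately show False using \<open>degree Q \<noteq> 0\<close> by simp
  qed
  then obtain q where q: "Q = [:q:]" by (auto elim: degree_eq_zeroE)
  have "?F * Q = [: q * ([:-1,0,1:] * hpoly a b), 0, q :]"
    unfolding q curve_poly_def by (simp add: mult.commute)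
  with Q have "[:G - A0, - A1, - A2:] = [: q * ([:-1,0,1:] * hpoly a b), 0, q :]" by simp
  hence e: "G - A0 = q * ([:-1,0,1:] * hpoly a b)" "A1 = 0" "q = - A2" by auto
  have m: "[:-1,0,1:] * hpoly a b = - ([:1,0,-1::real:] * hpoly a b)" by simp
  have "G - A0 = (-A2) * (- ([:1,0,-1::real:] * hpoly a b))" using e m by metis
  also have "\<dots> = A2 * ([:1,0,-1::real:] * hpoly a b)" by (rule minus_mult_minus)
  finally show ?thesis using e by blast
qed

lemma dvd_charI:
  fixes A0 A2 G :: "real poly"
  assumes "G - A0 = A2 * ([:1,0,-1:] * hpoly a b)"
  shows "curve_poly a b dvd ([:G:] - [:A0, 0, A2:])"
proof -
  have "[:G:] - [:A0, 0, A2:] = curve_poly a b * [:-A2:]"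
    using assms unfolding curve_poly_def by (simp add: algebra_simps)
  thus ?thesis by (metis dvd_triv_left)
qed

lemma lim_right:
  fixes f :: "real \<Rightarrow> real"
  assumes "isCont f pt" "0 < d" "\<forall>x. pt < x \<and> x < pt + d \<longrightarrow> 0 \<le> f x"
  shows "0 \<le> f pt"
proof -
  have "(f \<longlongrightarrow> f pt) (at_right pt)"
    using assms(1) unfolding isCont_def by (rule tendsto_mono[OF at_le, rotated]) simp
  moreover have "eventually (\<lambda>x. 0 \<le> f x) (at_right pt)"
    using eventually_at_right_real[of pt "pt+d"] assms(2,3) by (auto elim: eventually_mono)
  ultimately show ?thesis by (rule tendsto_lowerbound) simp
qed

lemma lim_left:
  fixes f :: "real \<Rightarrow> real"
  assumes "isCont f pt" "0 < d" "\<forall>x. pt - d < x \<and> x < pt \<longrightarrow> 0 \<le> f x"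
  shows "0 \<le> f pt"
proof -
  have "(f \<longlongrightarrow> f pt) (at_left pt)"
    using assms(1) unfolding isCont_def by (rule tendsto_mono[OF at_le, rotated]) simp
  moreover have "eventually (\<lambda>x. 0 \<le> f x) (at_left pt)"
  proof -
    have "eventually (\<lambda>x. x \<in> {pt-d<..<pt}) (at_left pt)"
      using assms(2) by (intro eventually_at_left_real) simp
    thus ?thesis by (rule eventually_mono) (use assms(3) in auto)
  qed
  ultimately show ?thesis by (rule tendsto_lowerbound) simp
qed

inductive SOSp :: "real poly \<Rightarrow> bool" where
  SOS0: "SOSp 0"
| SOSI: "SOSp p \<Longrightarrow> SOSp (q*q + p)"

lemma SOS_add: "SOSp p \<Longrightarrow> SOSp r \<Longrightarrow> SOSp (p + r)"
  by (induct rule: SOSp.induct) (auto simp: add.assoc intro: SOSp.intros)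

lemma SOS_mult_sq: "SOSp p \<Longrightarrow> SOSp (q*q*p)"
proof (induct rule: SOSp.induct)
  case SOS0 then show ?case by (simp add: SOSp.SOS0)
next
  case (SOSI p r)
  have "q*q*(r*r+p) = (q*r)*(q*r) + q*q*p" by (simp add: algebra_simps)
  with SOSI show ?case by (simp add: SOSp.SOSI)
qed

lemma SOS_mult: "SOSp p \<Longrightarrow> SOSp r \<Longrightarrow> SOSp (p * r)"
proof (induct rule: SOSp.induct)
  case SOS0 then show ?case by (simp add: SOSp.SOS0)
next
  case (SOSI p q)
  have "(q*q + p) * r = q*q*r + p*r" by (simp add: algebra_simps)
  with SOSI show ?case by (simp add: SOS_add SOS_mult_sq)
qed

lemma SOS_list: "SOSp p \<Longrightarrow> \<exists>qs. p = sum_list (map (\<lambda>q. q*q) qs)"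
proof (induct rule: SOSp.induct)
  case SOS0 then show ?case by (intro exI[of _ "[]"]) simp
next
  case (SOSI p q)
  then obtain qs where "p = sum_list (map (\<lambda>q. q*q) qs)" by blast
  then show ?case by (intro exI[of _ "q # qs"]) simp
qed

definition cpoly :: "real poly \<Rightarrow> complex \<Rightarrow> complex" where
  "cpoly p z = poly (map_poly complex_of_real p) z"

lemma cpoly_0[simp]: "cpoly 0 z = 0" by (simp add: cpoly_def)

lemma cpoly_pCons[simp]: "cpoly (pCons a p) z = of_real a + z * cpoly p z"
  by (simp add: cpoly_def map_poly_pCons)

lemma cpoly_add: "cpoly (p + q) z = cpoly p z + cpoly q z"
proof (induct p arbitrary: q)
  case 0 then show ?case by simp
next
  case (pCons a p)
  then show ?case by (cases q) (simp add: algebra_simps)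
qed

lemma cpoly_smult: "cpoly (smult a q) z = of_real a * cpoly q z"
  by (induct q) (simp_all add: algebra_simps)

lemma cpoly_mult: "cpoly (p * q) z = cpoly p z * cpoly q z"
  by (induct p) (simp_all add: algebra_simps cpoly_add cpoly_smult)

lemma cpoly_real: "cpoly p (of_real x) = of_real (poly p x)"
  by (induct p) simp_all

lemma cpoly_root_exists:
  assumes "degree p \<noteq> 0"
  shows "\<exists>z. cpoly p z = 0"
proof -
  have "degree (map_poly complex_of_real p) = degree p"
    by (rule degree_map_poly) simp
  with assms have "\<not> constant (poly (map_poly complex_of_real p))"
    by (simp add: constant_degree)
  then show ?thesis unfolding cpoly_def using fundamental_theorem_of_algebra by blast
qed

lemma nonneg_SOS: "(\<forall>x. 0 \<le> poly p x) \<Longrightarrow> SOSp p"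
proof (induct "degree p" arbitrary: p rule: less_induct)
  case less
  show ?case
  proof (cases "degree p = 0")
    case True
    then obtain c where pc: "p = [:c:]" by (auto elim: degree_eq_zeroE)
    have "0 \<le> c" using less(2) pc by (metis poly_pCons mult_zero_left poly_0 add_0_right)
    have "p = [:sqrt c:] * [:sqrt c:] + 0" using pc \<open>0 \<le> c\<close> by simp
    then show ?thesis by (metis SOSp.intros)
  next
    case False
    hence p0: "p \<noteq> 0" by auto
    from cpoly_root_exists[OF False] obtain z where z: "cpoly p z = 0" by blast
    show ?thesis
    proof (cases "Im z = 0")
      case True
      define r where "r = Re z"
      have "z = of_real r" using True unfolding r_def by (simp add: complex_eq_iff)
      with z have "poly p r = 0" by (simp add: cpoly_real)
      then obtain p1 where p1: "p = [:-r,1:] * p1" by (auto simp: poly_eq_0_iff_dvd elim: dvdE)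
      have ev1: "poly p x = (x - r) * poly p1 x" for x by (subst p1) (simp add: algebra_simps)
      have "0 \<le> poly p1 r"
        apply (rule lim_right[where f="poly p1" and pt=r and d=1]) apply simp apply simp
      proof (intro allI impI)
        fix x assume "r < x \<and> x < r + 1"
        hence "0 < x - r" by simp
        moreover have "0 \<le> (x - r) * poly p1 x" using less(2) ev1 by metis
        ultimately show "0 \<le> poly p1 x" by (simp add: zero_le_mult_iff)
      qed
      moreover have "0 \<le> - poly p1 r"
        apply (rule lim_left[where f="\<lambda>x. - poly p1 x" and pt=r and d=1]) apply simp apply simp
      proof (intro allI impI)
        fix x assume "r - 1 < x \<and> x < r"
        hence "x - r < 0" by simp
        moreover have "0 \<le> (x - r) * poly p1 x" using less(2) ev1 by metis
        ultimately show "0 \<le> - poly p1 x" by (simp add: zero_le_mult_iff)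
      qed
      ultimately have "poly p1 r = 0" by simp
      then obtain p2 where p2: "p1 = [:-r,1:] * p2" by (auto simp: poly_eq_0_iff_dvd elim: dvdE)
      have pp: "p = [:-r,1:] * [:-r,1:] * p2" using p1 p2 by (metis mult.assoc)
      have ev2: "poly p x = (x - r)^2 * poly p2 x" for x by (subst pp) (simp add: power2_eq_square algebra_simps)
      have nn: "0 \<le> poly p2 x" if "x \<noteq> r" for x
      proof -
        have "0 < (x - r)^2" using that by simp
        moreover have "0 \<le> (x - r)^2 * poly p2 x" using less(2) ev2 by metis
        ultimately show ?thesis by (simp add: zero_le_mult_iff)
      qed
      have "0 \<le> poly p2 r"
        by (rule lim_right[where f="poly p2" and pt=r and d=1]) (auto intro: nn)
      hence nn2: "\<forall>x. 0 \<le> poly p2 x" using nn by metis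
      have p20: "p2 \<noteq> 0" using pp p0 by auto
      have pp2: "p = [:-r,1:]^2 * p2" using pp by (simp add: power2_eq_square)
      have "degree p = degree ([:-r,1::real:]^2) + degree p2"
        unfolding pp2 by (rule degree_mult_eq) (use p20 in \<open>simp_all del: mult_pCons_left\<close>)
      also have "degree ([:-r,1::real:]^2) = 2" by (rule degree_linear_power)
      finally have "degree p2 < degree p" by simp
      with less(1) nn2 have "SOSp p2" by blast
      then show ?thesis unfolding pp by (rule SOS_mult_sq)
    next
      case False
      define m where "m = [:Re z ^ 2 + Im z ^ 2, -2 * Re z, 1:]"
      have m0: "m \<noteq> 0" and dm: "degree m = 2" unfolding m_def by auto
      have cm: "cpoly m z = 0" unfolding m_def
        by (simp add: complex_eq_iff power2_eq_square algebra_simps)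
      define rr where "rr = p mod m"
      define qq where "qq = p div m"
      have pdec: "p = m * qq + rr" unfolding rr_def qq_def by (simp add: mult.commute)
      have "cpoly rr z = 0" using z cm pdec by (simp add: cpoly_add cpoly_mult)
      have drr: "degree rr \<le> 1" using degree_mod_less[OF m0, of p] dm unfolding rr_def by auto
      have rr2: "rr = [:coeff rr 0, coeff rr 1:]"
        by (rule poly_eqI) (use drr in \<open>auto simp: coeff_pCons coeff_eq_0 split: nat.splits\<close>)
      with \<open>cpoly rr z = 0\<close> have "of_real (coeff rr 0) + z * of_real (coeff rr 1) = 0"
        by (metis cpoly_pCons cpoly_0 mult_zero_right add_0_right mult.commute)
      hence "coeff rr 1 * Im z = 0" "coeff rr 0 + coeff rr 1 * Re z = 0"
        by (auto simp: complex_eq_iff mult.commute)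
      hence "coeff rr 1 = 0" "coeff rr 0 = 0" using False by auto
      hence "rr = 0" using rr2 by simp
      hence pm: "p = m * qq" using pdec by simp
      have pmv: "poly m x = (x - Re z)^2 + (Im z)^2" for x
        unfolding m_def by (simp add: power2_eq_square algebra_simps)
      have mpos: "0 < poly m x" for x unfolding pmv using False by (simp add: add_nonneg_pos)
      have nn2: "\<forall>x. 0 \<le> poly qq x"
      proof
        fix x
        have "0 \<le> poly m x * poly qq x" using less(2) pm by (metis poly_mult)
        with mpos[of x] show "0 \<le> poly qq x" by (simp add: zero_le_mult_iff)
      qed
      have qq0: "qq \<noteq> 0" using pm p0 by auto
      have "degree p = 2 + degree qq" using pm qq0 m0 dm by (simp add: degree_mult_eq)
      hence "degree qq < degree p" by simp
      with less(1) nn2 have "SOSp qq" by blast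
      moreover have "SOSp m"
      proof -
        have "m = [:-Re z,1:]*[:-Re z,1:] + ([:Im z:]*[:Im z:] + 0)"
          unfolding m_def by (simp add: power2_eq_square)
        thus ?thesis by (metis SOSp.intros)
      qed
      ultimately show ?thesis unfolding pm by (rule SOS_mult[rotated])
    qed
  qed
qed

lemma core_ineqs:
  fixes a b :: real
  assumes a0: "0 \<le> a" and pos: "\<forall>x. 1 \<le> \<bar>x\<bar> \<longrightarrow> 0 < x^2 + a*x + b"
  shows "\<exists>c K (m::nat). 0 < K \<and> even m \<and>
     K = (1 + a + b) * (1 - c)^m \<and> K = (1 - a + b) * (1 + c)^m \<and>
     (\<forall>x. \<bar>x\<bar> \<le> 1 \<longrightarrow> (x^2 + a*x + b) * (x - c)^m \<le> K) \<and>
     (\<forall>x. 1 \<le> \<bar>x\<bar> \<longrightarrow> K \<le> (x^2 + a*x + b) * (x - c)^m)"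
proof -
  define h where "h x = x^2 + a*x + b" for x
  have h1: "0 < h 1" using pos[rule_format, of 1] by (simp add: h_def)
  have hm1: "0 < h (-1)" using pos[rule_format, of "-1"] by (simp add: h_def)
  have hle: "h (-1) \<le> h 1" using a0 by (simp add: h_def)
  define \<delta> where "\<delta> = b - a^2/4"
  have dpos: "0 < \<delta>" if "2 < a"
  proof (rule ccontr)
    assume "\<not> 0 < \<delta>"
    moreover have "0 < h (-a/2)" using pos[rule_format, of "-a/2"] that by (simp add: h_def)
    moreover have "h (-a/2) = \<delta>" by (simp add: h_def \<delta>_def power2_eq_square field_simps)
    ultimately show False by simp
  qed
  have hdelta: "\<delta> \<le> h x" for x
  proof -
    have "h x = (x + a/2)^2 + \<delta>" by (simp add: h_def \<delta>_def power2_eq_square field_simps)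
    thus ?thesis by simp
  qed
  obtain n :: nat where n: "max 1 (max (a / h(-1)) (if 2 < a then a/\<delta> else 0)) < real n"
    using reals_Archimedean2 by blast
  have n1: "1 \<le> real n" using n by simp
  have na: "a \<le> real n * h (-1)"
  proof -
    have "a / h(-1) < real n" using n by simp
    thus ?thesis using hm1 by (simp add: divide_less_eq mult.commute)
  qed
  have nd: "a \<le> real n * \<delta>" if "2 < a"
  proof -
    have "a / \<delta> < real n" using n that by simp
    thus ?thesis using dpos[OF that] by (simp add: divide_less_eq mult.commute)
  qed
  define m where "m = 2 * n"
  have m0: "0 < m" using n1 by (simp add: m_def)
  have evm: "even m" by (simp add: m_def)
  define q where "q = root m (h(-1) / h 1)"
  have q0: "0 < q" unfolding q_def using m0 h1 hm1 by simp
  have qm: "q ^ m = h(-1) / h 1" unfolding q_def using m0 h1 hm1 by (simp add: real_root_pow_pos)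
  have q1: "q \<le> 1"
  proof -
    have "h(-1) / h 1 \<le> 1" using hle h1 by simp
    hence "root m (h(-1) / h 1) \<le> root m 1" using m0 by simp
    thus ?thesis unfolding q_def using m0 by simp
  qed
  define c where "c = (1 - q) / (1 + q)"
  have c0: "0 \<le> c" unfolding c_def using q0 q1 by simp
  have c1: "c < 1" unfolding c_def using q0 by (simp add: divide_less_eq)
  have omc: "1 - c = 2 * q / (1 + q)" and opc: "1 + c = 2 / (1 + q)"
    using q0 by (simp_all add: c_def field_simps)
  define K where "K = h(-1) * (1 + c)^m"
  have K1: "K = h 1 * (1 - c)^m"
  proof -
    have e1: "2 * q / (1 + q) = q * (2 / (1 + q))" by simp
    have A: "h 1 * (1 - c)^m = h 1 * q^m * (2 / (1 + q))^m"
      unfolding omc e1 power_mult_distrib by simp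
    have B: "h 1 * q^m = h (-1)" using qm h1 by simp
    show ?thesis unfolding K_def opc using A B by simp
  qed
  have Kpos: "0 < K" unfolding K_def using hm1 c0 by simp
  have ev_abs: "(x - c)^m = \<bar>x - c\<bar>^m" for x using evm by (simp add: power_even_abs)
  have ev_sw: "(x - c)^m = (c - x)^m" for x
    using ev_abs[of x] power_even_abs[OF evm, of "c-x"] by (simp add: abs_minus_commute)
  have ev_nn: "0 \<le> (x - c)^m" for x using ev_abs by simp
  have mn: "real m = 2 * real n" by (simp add: m_def)
  have inside: "h x * (x - c)^m \<le> K" if hx1: "\<bar>x\<bar> \<le> 1" for x
  proof (cases "h x \<le> 0")
    case True
    hence "h x * (x - c)^m \<le> 0" using ev_nn[of x] by (simp add: mult_nonpos_nonneg)
    with Kpos show ?thesis by simp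
  next
    case False
    hence hx: "0 < h x" by simp
    show ?thesis
    proof (cases "2 * c - 1 \<le> x")
      case True
      have "h 1 - h x = (1 - x) * (1 + x + a)" by (simp add: h_def power2_eq_square algebra_simps)
      moreover have "0 \<le> (1 - x) * (1 + x + a)" using hx1 True c0 a0 by simp
      ultimately have hxl: "h x \<le> h 1" by simp
      have "\<bar>x - c\<bar> \<le> 1 - c" using True hx1 by (simp add: abs_le_iff)
      hence "\<bar>x - c\<bar>^m \<le> (1 - c)^m" by (rule power_mono) simp
      hence pl: "(x - c)^m \<le> (1 - c)^m" using ev_abs by simp
      have "h x * (x - c)^m \<le> h 1 * (1 - c)^m"
        by (rule mult_mono[OF hxl pl]) (use h1 ev_nn in auto)
      thus ?thesis using K1 by simp
    next
      case False
      define y where "y = 1 + x"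
      define u where "u = y / (1 + c)"
      have y0: "0 \<le> y" using hx1 by (simp add: y_def abs_le_iff)
      have y2: "y < 2 * c" using False by (simp add: y_def)
      have u0: "0 \<le> u" using y0 c0 by (simp add: u_def)
      have u1: "u \<le> 1" using y2 c1 c0 by (simp add: u_def)
      have cx: "c - x = (1 + c) * (1 - u)" using c0 by (simp add: u_def y_def field_simps)
      have pw: "(x - c)^m = (1 + c)^m * (1 - u)^m" using ev_sw[of x] cx by (simp add: power_mult_distrib)
      have bern: "1 + real m * u \<le> (1 + u)^m" using Bernoulli_inequality[of u m] u0 by simp
      have b2: "(1 - u)^m * (1 + real m * u) \<le> 1"
      proof -
        have "(1 - u)^m * (1 + real m * u) \<le> (1 - u)^m * (1 + u)^m"
          by (rule mult_left_mono[OF bern]) (use u1 in simp)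
        also have "\<dots> = (1 - u^2)^m" by (simp add: power2_eq_square power_mult_distrib[symmetric] algebra_simps)
        also have "\<dots> \<le> 1" by (rule power_le_one) (use u0 u1 in \<open>simp_all add: power_le_one\<close>)
        finally show ?thesis .
      qed
      have hxe: "h x = h(-1) + y * (y - 2 + a)" by (simp add: h_def y_def power2_eq_square algebra_simps)
      have s1: "y * (y - 2 + a) \<le> y * a" using y0 y2 c1 by (intro mult_left_mono) simp_all
      have s2: "y * a \<le> y * (real n * h(-1))" using y0 na by (intro mult_left_mono) simp_all
      have s3: "real n \<le> real m / (1 + c)" using c1 c0 mn n1 by (simp add: field_simps)
      have s4: "y * (real n * h(-1)) \<le> h(-1) * (real m * u)"
      proof -
        have "y * (real n * h(-1)) \<le> y * (real m / (1 + c) * h(-1))"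
          using s3 y0 hm1 by (intro mult_left_mono mult_right_mono) simp_all
        also have "\<dots> = h(-1) * (real m * u)" unfolding u_def by simp
        finally show ?thesis .
      qed
      have hxb: "h x \<le> h(-1) * (1 + real m * u)" using hxe s1 s2 s4 by (simp add: algebra_simps)
      have "h x * (x - c)^m = (1 + c)^m * (h x * (1 - u)^m)" using pw by simp
      also have "\<dots> \<le> (1 + c)^m * (h(-1) * (1 + real m * u) * (1 - u)^m)"
        by (intro mult_left_mono mult_right_mono hxb) (use c0 u1 in simp_all)
      also have "\<dots> = (1 + c)^m * h(-1) * ((1 - u)^m * (1 + real m * u))" by simp
      also have "\<dots> \<le> (1 + c)^m * h(-1) * 1"
        by (intro mult_left_mono b2) (use c0 hm1 in simp)
      finally show ?thesis unfolding K_def by (simp add: mult.commute)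
    qed
  qed
  have outside: "K \<le> h x * (x - c)^m" if hx1: "1 \<le> \<bar>x\<bar>" for x
  proof -
    have hx: "0 < h x" using pos hx1 by (simp add: h_def)
    show ?thesis
    proof (cases "1 \<le> x")
      case True
      have "h x - h 1 = (x - 1) * (x + 1 + a)" by (simp add: h_def power2_eq_square algebra_simps)
      moreover have "0 \<le> (x - 1) * (x + 1 + a)" using True a0 by simp
      ultimately have hxl: "h 1 \<le> h x" by simp
      have "(1 - c)^m \<le> (x - c)^m" by (rule power_mono) (use True c1 in simp_all)
      hence "h 1 * (1 - c)^m \<le> h x * (x - c)^m"
        by (intro mult_mono hxl) (use hx c1 in simp_all)
      thus ?thesis using K1 by simp
    next
      case False
      hence xm: "x \<le> -1" using hx1 by (simp add: abs_if split: if_splits)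
      define y where "y = - 1 - x"
      define u where "u = y / (1 + c)"
      have y0: "0 \<le> y" using xm by (simp add: y_def)
      have u0: "0 \<le> u" using y0 c0 by (simp add: u_def)
      have cx: "c - x = (1 + c) * (1 + u)" using c0 by (simp add: u_def y_def field_simps)
      have pw: "(x - c)^m = (1 + c)^m * (1 + u)^m" using ev_sw[of x] cx by (simp add: power_mult_distrib)
      have bern: "1 + real m * u \<le> (1 + u)^m" using Bernoulli_inequality[of u m] u0 by simp
      have hxe: "h x = h(-1) - y * (a - 2 - y)" by (simp add: h_def y_def power2_eq_square algebra_simps)
      have s3: "real n \<le> real m / (1 + c)" using c1 c0 mn n1 by (simp add: field_simps)
      have t1: "a - 2 - y \<le> h x * real n"
      proof (cases "2 < a")
        case True
        have "a \<le> real n * \<delta>" by (rule nd[OF True])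
        also have "\<dots> \<le> real n * h x" using hdelta[of x] by (intro mult_left_mono) simp_all
        finally show ?thesis using y0 by (simp add: mult.commute)
      next
        case False
        have "0 \<le> h x * real n" using hx by simp
        thus ?thesis using False y0 by linarith
      qed
      have t2: "h x * real n \<le> h x * (real m / (1 + c))" using s3 hx by (intro mult_left_mono) simp_all
      have t3: "y * (a - 2 - y) \<le> h x * (real m * u)"
      proof -
        have "y * (a - 2 - y) \<le> y * (h x * (real m / (1 + c)))"
          using t1 t2 y0 by (intro mult_left_mono) simp_all
        also have "\<dots> = h x * (real m * u)" unfolding u_def by simp
        finally show ?thesis .
      qed
      have hxb: "h(-1) \<le> h x * (1 + real m * u)" using hxe t3 by (simp add: algebra_simps)
      have "K = (1 + c)^m * h(-1)" unfolding K_def by simp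
      also have "\<dots> \<le> (1 + c)^m * (h x * (1 + real m * u))"
        by (intro mult_left_mono hxb) (use c0 in simp)
      also have "\<dots> \<le> (1 + c)^m * (h x * (1 + u)^m)"
        by (intro mult_left_mono bern) (use c0 hx in simp_all)
      also have "\<dots> = h x * (x - c)^m" using pw by simp
      finally show ?thesis .
    qed
  qed
  show ?thesis
    apply (rule exI[of _ c], rule exI[of _ K], rule exI[of _ m])
    using Kpos evm K1 inside outside unfolding K_def h_def by auto
qed

lemma exist_pos:
  fixes a b :: real
  assumes a0: "0 \<le> a" and pos: "\<forall>x. 1 \<le> \<bar>x\<bar> \<longrightarrow> 0 < x^2 + a*x + b"
  shows "\<exists>B C. (\<forall>x. 0 \<le> poly B x) \<and> (\<forall>x. 0 \<le> poly C x) \<and>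
           (\<forall>x. (x^2 + a*x + b) * poly B x + (1 - x^2) * poly C x = 1)"
proof -
  obtain c K and m :: nat where K: "0 < K" "even m" "K = (1 + a + b) * (1 - c)^m"
     "K = (1 - a + b) * (1 + c)^m"
     and inside: "\<forall>x. \<bar>x\<bar> \<le> 1 \<longrightarrow> (x^2 + a*x + b) * (x - c)^m \<le> K"
     and outside: "\<forall>x. 1 \<le> \<bar>x\<bar> \<longrightarrow> K \<le> (x^2 + a*x + b) * (x - c)^m"
    using core_ineqs[OF a0 pos] by blast
  define B where "B = smult (1/K) ([:-c,1:]^m)"
  have pB: "poly B x = (x - c)^m / K" for x by (simp add: B_def)
  have Bnn: "0 \<le> poly B x" for x unfolding pB using K(1,2) by (simp add: zero_le_even_power)
  define R where "R = 1 - [:b,a,1:] * B"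
  have pR0: "poly R x = 1 - (x^2 + a*x + b) * poly B x" for x
    by (simp add: R_def power2_eq_square algebra_simps)
  have pR: "poly R x = 1 - (x^2 + a*x + b) * (x - c)^m / K" for x
    unfolding pR0 pB by simp
  have k1: "(1^2 + a*1 + b) * (1 - c)^m = K" using K(3) by simp
  have R1: "poly R 1 = 0" unfolding pR k1 using K(1) by simp
  have evm: "(-1 - c)^m = (1 + c)^m"
  proof -
    have e: "-1 - c = -(1 + c)" by simp
    show ?thesis unfolding e by (rule power_minus_even[OF K(2)])
  qed
  have k2: "((-1)^2 + a*(-1) + b) * (-1 - c)^m = K" using K(4) evm by simp
  have Rm1: "poly R (-1) = 0" unfolding pR k2 using K(1) by simp
  obtain R1' where R1': "R = [:-1,1:] * R1'" using R1 by (auto simp: poly_eq_0_iff_dvd elim: dvdE)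
  have "poly R (-1) = -2 * poly R1' (-1)" unfolding R1' by simp
  hence "poly R1' (-1) = 0" using Rm1 by simp
  then obtain C1 where C1: "R1' = [:1,1:] * C1" by (auto simp: poly_eq_0_iff_dvd elim: dvdE)
  define C where "C = - C1"
  have pRC: "poly R x = (1 - x^2) * poly C x" for x
    unfolding R1' C1 C_def by (simp add: power2_eq_square algebra_simps)
  have ident: "(x^2 + a*x + b) * poly B x + (1 - x^2) * poly C x = 1" for x
    using pR0[of x] pRC[of x] by (simp add: algebra_simps)
  have cin: "0 \<le> poly C x" if "\<bar>x\<bar> < 1" for x
  proof -
    have g: "0 < 1 - x^2" using that by (simp add: abs_square_less_1)
    have "(x^2 + a*x + b) * (x - c)^m \<le> K" using inside that by simp
    hence "0 \<le> poly R x" unfolding pR using K(1) by simp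
    hence "0 \<le> (1 - x^2) * poly C x" using pRC by simp
    with g show ?thesis by (simp add: zero_le_mult_iff)
  qed
  have cout: "0 \<le> poly C x" if "1 < \<bar>x\<bar>" for x
  proof -
    have "1 * 1 < \<bar>x\<bar> * \<bar>x\<bar>" using that by (intro mult_strict_mono) auto
    hence g: "1 - x^2 < 0" by (simp add: power2_eq_square)
    have "K \<le> (x^2 + a*x + b) * (x - c)^m" using outside that by simp
    hence "poly R x \<le> 0" unfolding pR using K(1) by simp
    hence "(1 - x^2) * poly C x \<le> 0" using pRC by simp
    with g show ?thesis by (simp add: mult_le_0_iff)
  qed
  have c1: "0 \<le> poly C 1"
    by (rule lim_left[where f="poly C" and pt=1 and d=1]) (auto intro: cin)
  have cm1: "0 \<le> poly C (-1)"
    by (rule lim_right[where f="poly C" and pt="-1" and d=1]) (auto intro: cin)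
  have Cnn: "0 \<le> poly C x" for x
  proof -
    consider "\<bar>x\<bar> < 1" | "1 < \<bar>x\<bar>" | "x = 1" | "x = -1" by linarith
    thus ?thesis using cin cout c1 cm1 by cases auto
  qed
  show ?thesis using Bnn Cnn ident by blast
qed

lemma exist_any:
  fixes a b :: real
  assumes pos: "\<forall>x. 1 \<le> \<bar>x\<bar> \<longrightarrow> 0 < x^2 + a*x + b"
  shows "\<exists>B C. (\<forall>x. 0 \<le> poly B x) \<and> (\<forall>x. 0 \<le> poly C x) \<and>
           (\<forall>x. (x^2 + a*x + b) * poly B x + (1 - x^2) * poly C x = 1)"
proof (cases "0 \<le> a")
  case True thus ?thesis using exist_pos[OF True pos] by blast
next
  case False
  have pos': "\<forall>x. 1 \<le> \<bar>x\<bar> \<longrightarrow> 0 < x^2 + (-a)*x + b"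
  proof (intro allI impI)
    fix x :: real assume "1 \<le> \<bar>x\<bar>"
    hence "0 < (-x)^2 + a*(-x) + b" using pos[rule_format, of "-x"] by simp
    thus "0 < x^2 + (-a)*x + b" by simp
  qed
  obtain B C where BC: "\<forall>x. 0 \<le> poly B x" "\<forall>x. 0 \<le> poly C x"
     "\<forall>x. (x^2 + (-a)*x + b) * poly B x + (1 - x^2) * poly C x = 1"
    using exist_pos[OF _ pos'] False by auto
  define B' where "B' = pcompose B [:0,-1:]"
  define C' where "C' = pcompose C [:0,-1:]"
  have pB: "poly B' x = poly B (-x)" and pC: "poly C' x = poly C (-x)" for x
    by (simp_all add: B'_def C'_def poly_pcompose)
  have "\<forall>x. (x^2 + a*x + b) * poly B' x + (1 - x^2) * poly C' x = 1"
  proof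
    fix x :: real
    have "((-x)^2 + (-a)*(-x) + b) * poly B (-x) + (1 - (-x)^2) * poly C (-x) = 1" using BC(3) by blast
    thus "(x^2 + a*x + b) * poly B' x + (1 - x^2) * poly C' x = 1" unfolding pB pC by simp
  qed
  thus ?thesis using BC(1,2) pB pC by metis
qed

lemma gs_sum:
  fixes g :: "real poly"
  shows "sum_list (map (\<lambda>(u,v). [:u,v:]^2) (map (\<lambda>c. (g*c, 0)) cs @ map (\<lambda>w. (0,w)) ws)) =
     [: g * g * sum_list (map (\<lambda>c. c*c) cs), 0, sum_list (map (\<lambda>w. w*w) ws) :]"
proof -
  have La: "sum_list (map (\<lambda>(u,v). [:u,v:]^2) (map (\<lambda>c. (g*c, 0::real poly)) cs))
      = [: g * g * sum_list (map (\<lambda>c. c*c) cs) :]"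
    by (induct cs) (simp_all add: sq2 algebra_simps)
  have Lb: "sum_list (map (\<lambda>(u,v). [:u,v:]^2) (map (\<lambda>w. (0::real poly, w)) ws))
      = [: 0, 0, sum_list (map (\<lambda>w. w*w) ws) :]"
    by (induct ws) (simp_all add: sq2)
  show ?thesis unfolding map_append sum_list_append La Lb by simp
qed

lemma ring_aux:
  fixes G h B C :: "'a::comm_ring_1"
  assumes "h * B + G * C = 1"
  shows "G - G * G * C = B * (G * h)"
proof -
  have "G = G * (h * B + G * C)" using assms by simp
  also have "\<dots> = B * (G * h) + G * G * C" by (simp add: algebra_simps)
  finally show ?thesis by (simp add: algebra_simps)
qed

lemma cert:
  fixes a b :: real
  assumes "hpoly a b * sum_list (map (\<lambda>w. w*w) ws) + [:1,0,-1:] * sum_list (map (\<lambda>c. c*c) cs) = 1"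
  shows "curve_poly a b dvd ([: [:1,0,-1:] :] - sum_list (map (\<lambda>(u,v). [:u,v:]^2)
            (map (\<lambda>c. ([:1,0,-1:]*c, 0)) cs @ map (\<lambda>w. (0,w)) ws)))"
  unfolding gs_sum
  by (rule dvd_charI, rule ring_aux[OF assms])

lemma poly_h: "poly (hpoly a b) x = x^2 + a*x + b"
  by (simp add: hpoly_def power2_eq_square algebra_simps)

lemma poly_g: "poly [:1,0,-1::real:] x = 1 - x^2"
  by (simp add: power2_eq_square)

lemma lists_exist:
  assumes "(a, b) \<in> P_set"
  shows "\<exists>ws cs. hpoly a b * sum_list (map (\<lambda>w. w*w) ws) + [:1,0,-1:] * sum_list (map (\<lambda>c. c*c) cs) = 1"
proof -
  have pos: "\<forall>x. 1 \<le> \<bar>x\<bar> \<longrightarrow> 0 < x^2 + a*x + b"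
    using assms unfolding P_set_def by (auto simp: poly_h)
  obtain B C where BC: "\<forall>x. 0 \<le> poly B x" "\<forall>x. 0 \<le> poly C x"
    "\<forall>x. (x^2 + a*x + b) * poly B x + (1 - x^2) * poly C x = 1"
    using exist_any[OF pos] by blast
  obtain ws where ws: "B = sum_list (map (\<lambda>w. w*w) ws)" using SOS_list[OF nonneg_SOS[OF BC(1)]] by blast
  obtain cs where cs: "C = sum_list (map (\<lambda>c. c*c) cs)" using SOS_list[OF nonneg_SOS[OF BC(2)]] by blast
  have "poly (hpoly a b * B + [:1,0,-1:] * C) = poly 1"
  proof
    fix x
    show "poly (hpoly a b * B + [:1,0,-1:] * C) x = poly 1 x"
      using BC(3) by (simp only: poly_add poly_mult poly_h poly_g poly_1)
  qed
  hence "hpoly a b * B + [:1,0,-1:] * C = 1" by (simp add: poly_eq_poly_eq_iff)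
  thus ?thesis using ws cs by blast
qed

lemma valid_decomp:
  assumes "curve_poly a b dvd ([: [:1,0,-1:] :] - sum_list (map (\<lambda>(u,v). [:u,v:]^2) gs))"
  shows "poly (sum_list (map (\<lambda>(u,v). u*u) gs)) x =
     (1 - x^2) - poly (sum_list (map (\<lambda>(u,v). v*v) gs)) x * ((1 - x^2) * (x^2 + a*x + b))"
proof -
  have "[:1,0,-1:] - sum_list (map (\<lambda>(u,v). u*u) gs) =
     sum_list (map (\<lambda>(u,v). v*v) gs) * ([:1,0,-1:] * hpoly a b)"
    using dvd_char[OF assms[unfolded sum3]] by blast
  hence "poly ([:1,0,-1:] - sum_list (map (\<lambda>(u,v). u*u) gs)) x =
     poly (sum_list (map (\<lambda>(u,v). v*v) gs) * ([:1,0,-1:] * hpoly a b)) x" by simp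
  thus ?thesis by (simp only: poly_diff poly_mult poly_h poly_g)
qed

lemma sum_sq_nonneg: "0 \<le> poly (sum_list (map (\<lambda>(u,v). u*u) gs)) (x::real)"
  unfolding poly_sum_list by (rule sum_list_nonneg) auto

lemma delta_v: "delta u v \<le> e \<Longrightarrow> v \<noteq> 0 \<Longrightarrow> degree v + 2 \<le> e"
  by (simp add: delta_def)

lemma lower_bound:
  assumes "curve_poly a b dvd ([: [:1,0,-1:] :] - sum_list (map (\<lambda>(u,v). [:u,v:]^2) gs))"
    and "\<forall>(u,v)\<in>set gs. delta u v \<le> e"
  shows "2 \<le> e"
proof (rule ccontr)
  assume "\<not> 2 \<le> e"
  have v0: "\<forall>(u,v)\<in>set gs. v = 0"
  proof (intro ballI)
    fix y assume y: "y \<in> set gs"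
    obtain u v where uv: "y = (u, v)" by (cases y)
    have "delta u v \<le> e" using assms(2) y uv by auto
    hence "v = 0" using delta_v[of u v e] \<open>\<not> 2 \<le> e\<close> by (cases "v = 0") auto
    thus "case y of (u, v) \<Rightarrow> v = 0" using uv by simp
  qed
  have "\<forall>y\<in>set gs. (\<lambda>(u,v). v*v) y = 0" using v0 by auto
  hence A2: "sum_list (map (\<lambda>(u,v). v*v) gs) = 0" by (induct gs) auto
  have "poly (sum_list (map (\<lambda>(u,v). u*u) gs)) 2 =
     (1 - 2^2) - poly 0 2 * ((1 - 2^2) * (2^2 + a*2 + b))"
    using valid_decomp[OF assms(1), of 2] unfolding A2 .
  also have "\<dots> = (-3::real)" by simp
  finally have "poly (sum_list (map (\<lambda>(u,v). u*u) gs)) 2 = -3" .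
  with sum_sq_nonneg[of gs 2] show False by linarith
qed

lemma deg0_const:
  assumes "degree (v::real poly) = 0" shows "poly v x = poly v 0"
proof -
  obtain c where "v = [:c:]" using assms by (rule degree_eq_zeroE)
  thus ?thesis by simp
qed

lemma a_zero:
  assumes "curve_poly a b dvd ([: [:1,0,-1:] :] - sum_list (map (\<lambda>(u,v). [:u,v:]^2) gs))"
    and "\<forall>(u,v)\<in>set gs. delta u v \<le> 2"
  shows "a = 0"
proof -
  have d0: "\<forall>(u,v)\<in>set gs. degree v = 0"
  proof (intro ballI)
    fix y assume y: "y \<in> set gs"
    obtain u v where uv: "y = (u, v)" by (cases y)
    have "delta u v \<le> 2" using assms(2) y uv by auto
    hence "degree v = 0" using delta_v[of u v 2] by (cases "v = 0") auto
    thus "case y of (u, v) \<Rightarrow> degree v = 0" using uv by simp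
  qed
  define s where "s = poly (sum_list (map (\<lambda>(u,v). v*v) gs)) 0"
  have sx: "poly (sum_list (map (\<lambda>(u,v). v*v) gs)) x = s" for x
  proof -
    have "map (\<lambda>y. poly ((\<lambda>(u,v). v*v) y) x) gs = map (\<lambda>y. poly ((\<lambda>(u,v). v*v) y) 0) gs"
    proof (rule map_cong)
      fix y assume y: "y \<in> set gs"
      obtain u v where uv: "y = (u, v)" by (cases y)
      have "degree v = 0" using d0 y uv by auto
      hence "poly v x = poly v 0" by (rule deg0_const)
      thus "poly ((\<lambda>(u,v). v*v) y) x = poly ((\<lambda>(u,v). v*v) y) 0" using uv by simp
    qed simp
    thus ?thesis unfolding s_def poly_sum_list by (rule arg_cong[where f=sum_list])
  qed
  define f where "f x = 1 - s * (x^2 + a*x + b)" for x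
  have fc: "isCont f x" for x unfolding f_def by (intro continuous_intros)
  have key: "0 \<le> (1 - x^2) * f x" for x
  proof -
    have v: "poly (sum_list (map (\<lambda>(u,v). u*u) gs)) x = (1 - x^2) - s * ((1 - x^2) * (x^2 + a*x + b))"
      using valid_decomp[OF assms(1), of x] unfolding sx .
    have "(1 - x^2) * f x = (1 - x^2) - s * ((1 - x^2) * (x^2 + a*x + b))"
      unfolding f_def by (simp add: algebra_simps)
    thus ?thesis using v sum_sq_nonneg[of gs x] by linarith
  qed
  have fin: "0 \<le> f x" if "\<bar>x\<bar> < 1" for x
  proof -
    have "0 < 1 - x^2" using that by (simp add: abs_square_less_1)
    with key[of x] show ?thesis by (simp add: zero_le_mult_iff)
  qed
  have fout: "0 \<le> - f x" if "1 < \<bar>x\<bar>" for x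
  proof -
    have "1 * 1 < \<bar>x\<bar> * \<bar>x\<bar>" using that by (intro mult_strict_mono) auto
    hence "1 - x^2 < 0" by (simp add: power2_eq_square)
    with key[of x] show ?thesis by (simp add: zero_le_mult_iff)
  qed
  have fo1: "f x \<le> 0" if "1 < x" for x using that fout[of x] by simp
  have fo2: "f x \<le> 0" if "x < -1" for x using that fout[of x] by simp
  have fc': "isCont (\<lambda>x. - f x) x" for x using fc by (intro continuous_intros)
  have "0 \<le> f 1" by (rule lim_left[where f=f and pt=1 and d=1]) (auto intro: fc fin)
  moreover have "0 \<le> - f 1" by (rule lim_right[where f="\<lambda>x. - f x" and pt=1 and d=1]) (auto intro: fc' fo1 fo2)
  moreover have "0 \<le> f (-1)" by (rule lim_right[where f=f and pt="-1" and d=1]) (auto intro: fc fin)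
  moreover have "0 \<le> - f (-1)" by (rule lim_left[where f="\<lambda>x. - f x" and pt="-1" and d=1]) (auto intro: fc' fo1 fo2)
  ultimately have "f 1 = 0" "f (-1) = 0" by auto
  hence h1: "s * (1 + a + b) = 1" and h2: "s * (1 - a + b) = 1" unfolding f_def by (simp_all add: algebra_simps)
  have "2 * (s * a) = s * (1 + a + b) - s * (1 - a + b)" by (simp add: algebra_simps)
  hence sa: "s * a = 0" using h1 h2 by simp
  have "s \<noteq> 0" using h1 by auto
  thus ?thesis using sa by simp
qed

theorem mainTheorem12:
  fixes a b :: real
  assumes "(a, b) \<in> P_set"
  shows "N a b \<ge> 2 \<and> (N a b = 2 \<longleftrightarrow> a = 0)"
proof -
  define Pe where "Pe = (\<lambda>e::nat. \<exists>gs :: (real poly \<times> real poly) list.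
      curve_poly a b dvd ([: [:1, 0, -1:] :] - sum_list (map (\<lambda>(u, v). [:u, v:]^2) gs)) \<and>
      (\<forall>(u, v) \<in> set gs. delta u v \<le> e))"
  have Nd: "N a b = (LEAST e. Pe e)" unfolding N_def theta_def Pe_def by simp
  obtain ws cs where wc: "hpoly a b * sum_list (map (\<lambda>w. w*w) ws) + [:1,0,-1:] * sum_list (map (\<lambda>c. c*c) cs) = 1"
    using lists_exist[OF assms] by blast
  define gs where "gs = map (\<lambda>c. ([:1,0,-1:]*c, 0)) cs @ map (\<lambda>w. (0,w)) ws"
  have "Pe (sum_list (map (\<lambda>(u,v). delta u v) gs))"
    unfolding Pe_def
  proof (intro exI[of _ gs] conjI)
    show "curve_poly a b dvd ([: [:1, 0, -1:] :] - sum_list (map (\<lambda>(u, v). [:u, v:]^2) gs))"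
      unfolding gs_def by (rule cert[OF wc])
    show "\<forall>(u, v) \<in> set gs. delta u v \<le> sum_list (map (\<lambda>(u,v). delta u v) gs)"
    proof (intro ballI)
      fix y assume y: "y \<in> set gs"
      obtain u v where uv: "y = (u, v)" by (cases y)
      have "(\<lambda>(u,v). delta u v) y \<in> set (map (\<lambda>(u,v). delta u v) gs)" using y by simp
      hence "(\<lambda>(u,v). delta u v) y \<le> sum_list (map (\<lambda>(u,v). delta u v) gs)"
        by (rule member_le_sum_list) auto
      thus "case y of (u, v) \<Rightarrow> delta u v \<le> sum_list (map (\<lambda>(u,v). delta u v) gs)" using uv by simp
    qed
  qed
  hence ex: "\<exists>e. Pe e" by blast
  have PN: "Pe (N a b)" unfolding Nd by (rule LeastI_ex[OF ex])
  have lb: "2 \<le> e" if "Pe e" for e using that unfolding Pe_def using lower_bound by blast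
  have az: "a = 0" if "Pe 2" using that unfolding Pe_def using a_zero by blast
  have p2: "Pe 2" if a0: "a = 0"
  proof -
    have b1: "0 < 1 + b" using assms a0 unfolding P_set_def by (auto simp: poly_h dest: spec[of _ 1])
    define t where "t = 1 / sqrt (1 + b)"
    have tt: "t * t = 1 / (1 + b)" unfolding t_def using b1 by (simp add: real_sqrt_mult[symmetric])
    have t0: "t \<noteq> 0" unfolding t_def using b1 by simp
    have "poly (hpoly a b * sum_list (map (\<lambda>w. w*w) [[:t:]]) + [:1,0,-1:] * sum_list (map (\<lambda>c. c*c) [[:t:]])) = poly 1"
    proof
      fix x :: real
      have "(x^2 + b) * (t * t) + (1 - x^2) * (t * t) = (1 + b) * (t * t)" by (simp add: algebra_simps)
      also have "\<dots> = 1" using tt b1 by simp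
      finally show "poly (hpoly a b * sum_list (map (\<lambda>w. w*w) [[:t:]]) + [:1,0,-1:] * sum_list (map (\<lambda>c. c*c) [[:t:]])) x = poly 1 x"
        using a0 by (simp add: poly_h poly_g) (simp add: algebra_simps power2_eq_square)
    qed
    hence wc2: "hpoly a b * sum_list (map (\<lambda>w. w*w) [[:t:]]) + [:1,0,-1:] * sum_list (map (\<lambda>c. c*c) [[:t:]]) = 1"
      by (simp only: poly_eq_poly_eq_iff)
    show ?thesis unfolding Pe_def
    proof (intro exI[of _ "map (\<lambda>c. ([:1,0,-1:]*c, 0)) [[:t:]] @ map (\<lambda>w. (0,w)) [[:t:]]"] conjI)
      show "curve_poly a b dvd ([: [:1, 0, -1:] :] - sum_list (map (\<lambda>(u, v). [:u, v:]^2)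
          (map (\<lambda>c. ([:1,0,-1:]*c, 0)) [[:t:]] @ map (\<lambda>w. (0,w)) [[:t:]])))"
        by (rule cert[OF wc2])
      have d1: "degree ([:1,0,-1::real:] * [:t:]) \<le> 2"
        using degree_mult_le[of "[:1,0,-1::real:]" "[:t:]"] by simp
      show "\<forall>(u, v) \<in> set (map (\<lambda>c. ([:1,0,-1:]*c, 0)) [[:t:]] @ map (\<lambda>w. (0,w)) [[:t:]]). delta u v \<le> 2"
        using d1 t0 by (simp add: delta_def)
    qed
  qed
  have "2 \<le> N a b" using lb[OF PN] .
  moreover have "N a b = 2 \<longrightarrow> a = 0" using PN az by auto
  moreover have "a = 0 \<longrightarrow> N a b = 2"
  proof
    assume "a = 0"
    hence "Pe 2" by (rule p2)
    hence "N a b \<le> 2" unfolding Nd by (rule Least_le)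
    thus "N a b = 2" using \<open>2 \<le> N a b\<close> by simp
  qed
  ultimately show ?thesis by blast
qed

end
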